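(* For all integers $k,r\geq2$ and every real $x\geq r(k-1)$, $$\frac{e^{-x}x^{k-1}}{f_{k-1}(x)\,(k-2)!}<\frac{1}{r-1}.$$
   Context: $f_t(x)=e^{-x}\sum_{i\geq t}x^i/i!$. *)

theory Defs
  imports "HOL-Analysis.Analysis"
begin

definition poisson_tail :: "nat \<Rightarrow> real \<Rightarrow> real" where
  "poisson_tail t x = exp (- x) * (\<Sum>i. x ^ (i + t) / fact (i + t))"

end

theory Submission
  imports Defs
begin

lemma term_ge:
  fixes x :: real and t r :: nat
  assumes x: "x \<ge> real r * real t" and t: "t \<ge> 1"
  shows "j \<le> (r - 1) * t \<Longrightarrow> x ^ (j + t) / fact (j + t) \<ge> x ^ t / fact t"
proof (induction j)
  case 0 then show ?case by simp
next
  case (Suc j)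
  have r1: "r \<ge> 1" using Suc.prems t by (cases r) auto
  have le: "real (Suc j + t) \<le> x"
  proof -
    have "Suc j + t \<le> r * t" using Suc.prems r1 by (simp add: algebra_simps diff_mult_distrib)
    hence "real (Suc j + t) \<le> real r * real t" by (metis of_nat_le_iff of_nat_mult)
    thus ?thesis using x by linarith
  qed
  have pos: "real (Suc j + t) > 0" by simp
  have ih: "x ^ t / fact t \<le> x ^ (j + t) / fact (j + t)" using Suc by simp
  have "x ^ (Suc j + t) / fact (Suc j + t) = x ^ (j + t) / fact (j + t) * (x / real (Suc j + t))"
    by (simp add: field_simps)
  moreover have "x / real (Suc j + t) \<ge> 1" using le pos by simp
  moreover have "x \<ge> 0" using le pos by linarith
  hence "x ^ (j + t) / fact (j + t) \<ge> 0" by simp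
  ultimately have "x ^ (j + t) / fact (j + t) * 1 \<le> x ^ (Suc j + t) / fact (Suc j + t)"
    by (metis mult_left_mono)
  thus ?case using ih by linarith
qed

theorem lemma49:
  fixes k r :: nat and x :: real
  assumes "k \<ge> 2" and "r \<ge> 2" and "x \<ge> real r * (real k - 1)"
  shows "exp (- x) * x ^ (k - 1) / (poisson_tail (k - 1) x * fact (k - 2)) < 1 / (real r - 1)"
proof -
  define t where "t = k - 1"
  have t1: "t \<ge> 1" using assms(1) unfolding t_def by simp
  have k2: "k - 2 = t - 1" unfolding t_def by simp
  have xt: "x \<ge> real r * real t" using assms(1,3) unfolding t_def by (simp add: of_nat_diff)
  have rt: "real r * real t \<ge> 2" using assms(2) t1
  proof -
    have "real r \<ge> 2" "real t \<ge> 1" using assms(2) t1 by auto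
    hence "real r * 1 \<le> real r * real t" by (intro mult_left_mono) auto
    thus ?thesis using \<open>real r \<ge> 2\<close> by linarith
  qed
  have xpos: "x > 0" using xt rt by linarith
  define a where "a j = x ^ (j + t) / fact (j + t)" for j
  have apos: "a j \<ge> 0" for j unfolding a_def using xpos by simp
  have summ: "summable a"
  proof -
    have "summable (\<lambda>n. x ^ n / fact n)" using summable_exp[of x] by (simp add: field_simps)
    hence "summable (\<lambda>n. x ^ (n + t) / fact (n + t))" by (subst summable_iff_shift) 
    thus ?thesis unfolding a_def .
  qed
  define N where "N = (r - 1) * t + 1"
  define c where "c = x ^ t / fact t"
  have cpos: "c > 0" unfolding c_def using xpos by simp
  have "sum a {..<N} \<ge> sum (\<lambda>_. c) {..<N}"
    apply (rule sum_mono)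
    unfolding a_def c_def N_def using term_ge[OF xt t1] by auto
  hence "sum a {..<N} \<ge> real N * c" by simp
  moreover have "sum a {..<N} \<le> suminf a" using summ apos by (intro sum_le_suminf) auto
  ultimately have S: "suminf a \<ge> real N * c" by linarith
  have pt: "poisson_tail (k - 1) x = exp (- x) * suminf a" unfolding poisson_tail_def a_def t_def ..
  have ft: "fact t = real t * fact (t - 1)" using t1 by (metis Suc_diff_1 fact_Suc of_nat_mult less_le_trans zero_less_one)
  have Npos: "real N > 0" unfolding N_def by (simp only: of_nat_0_less_iff)
  have Spos: "suminf a > 0" using S mult_pos_pos[OF Npos cpos] by linarith
  have "exp (- x) * x ^ (k - 1) / (poisson_tail (k - 1) x * fact (k - 2)) = x ^ t / (suminf a * fact (t - 1))"
    unfolding pt k2 by (simp add: t_def field_simps)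
  also have "\<dots> = real t * c / suminf a" unfolding c_def ft using t1 Spos by (simp add: field_simps)
  also have "\<dots> \<le> real t * c / (real N * c)"
    using S cpos t1 Spos mult_pos_pos[OF Npos cpos] by (intro divide_left_mono) auto
  also have "\<dots> = real t / real N" using cpos by simp
  also have "\<dots> < 1 / (real r - 1)"
  proof -
    have r1: "real r - 1 > 0" using assms(2) by simp
    have "real N = (real r - 1) * real t + 1" unfolding N_def using assms(2) by (simp add: of_nat_diff)
    hence "real t * (real r - 1) < real N" by (simp add: algebra_simps)
    thus ?thesis using r1 Npos by (simp add: field_simps)
  qed
  finally show ?thesis .
qed

end
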